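(* Let $\delta^{*}_{1/2}$ be the decision rule \[ \delta^{*}_{1/2}(\mathbf{y},u)=\begin{cases}1 & \text{if } \sum_{i=1}^{n} w_i^{*} y_i > C^{*},\\ 0 & \text{if } \sum_{i=1}^{n} w_i^{*} y_i < C^{*},\\ u & \text{if } \sum_{i=1}^{n} w_i^{*} y_i = C^{*},\end{cases} \qquad w_i^{*}=2\log\!\left(\frac{\gamma_i}{1-\gamma_i}\right),\quad C^{*}=\sum_{i=1}^{n}\frac{w_i^{*}}{2}. \] This is the Bayes decision rule for the prior $P(\theta=1)=c=\tfrac12$, for which $\log\frac{1-c}{c}=0$. Then $\delta^{*}_{1/2}$ has constant risk in $\theta$ and is a minimax decision rule.
   Context: The setting is a crowdsourcing problem with known expert accuracies. The unknown quantity is $\theta\in\{0,1\}$, and the observations are expert opinions $\mathbf{Y}=(Y_1,\ldots,Y_n)\in\{0,1\}^n$ together with a fair coin flip $U\sim\text{Bernoulli}(1/2)$ that is independent of $\mathbf{Y}$. The following assumptions hold: - $Y_1,\ldots,Y_n$ are independent conditionally on $\theta$. - $\gamma_i:=P(Y_i=1\mid\theta=1)=P(Y_i=0\mid\theta=0)$ is known for each $i$. - $n$ is odd. A decision rule is a map $\delta:\{0,1\}^n\times\{0,1\}\to\{0,1\}$. The loss is $L(\theta,a)=\mathbb{I}(\theta\neq a)$, and the risk is $R(\delta,\theta)=\mathbb{E}[L(\delta(\mathbf{Y},U),\theta)\mid\theta]$. A rule $\delta^*$ is minimax if $\sup_\theta R(\delta^*,\theta)=\inf_\delta\sup_\theta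 R(\delta,\theta)$. *)

theory Defs
  imports Complex_Main "HOL-Library.FuncSet"
begin

text \<open>Observations: an expert-opinion vector y in {0,1}^n is a function on {..<n}
  (extensional, value True meaning Y_i = 1).  The state theta in {0,1} is a bool
  (True meaning theta = 1).  The fair coin U is a bool (True meaning U = 1).\<close>

type_synonym decision_rule = "(nat \<Rightarrow> bool) \<Rightarrow> bool \<Rightarrow> bool"

definition obs_space :: "nat \<Rightarrow> (nat \<Rightarrow> bool) set" where
  "obs_space n = ({..<n} \<rightarrow>\<^sub>E (UNIV :: bool set))"

text \<open>P(Y = y | theta), using conditional independence and
  P(Y_i = theta | theta) = gamma_i.\<close>
definition lik :: "nat \<Rightarrow> (nat \<Rightarrow> real) \<Rightarrow> bool \<Rightarrow> (nat \<Rightarrow> bool) \<Rightarrow> real" where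
  "lik n \<gamma> \<theta> y = (\<Prod>i<n. if y i = \<theta> then \<gamma> i else 1 - \<gamma> i)"

text \<open>Risk R(delta, theta) = E[ 1(delta(Y,U) \<noteq> theta) | theta ], U ~ Bernoulli(1/2)
  independent of Y.\<close>
definition risk :: "nat \<Rightarrow> (nat \<Rightarrow> real) \<Rightarrow> decision_rule \<Rightarrow> bool \<Rightarrow> real" where
  "risk n \<gamma> \<delta> \<theta> =
     (\<Sum>y\<in>obs_space n. \<Sum>u\<in>(UNIV::bool set).
        lik n \<gamma> \<theta> y * (1/2) * (if \<delta> y u \<noteq> \<theta> then 1 else 0))"

definition is_minimax :: "nat \<Rightarrow> (nat \<Rightarrow> real) \<Rightarrow> decision_rule \<Rightarrow> bool" where
  "is_minimax n \<gamma> \<delta>s \<longleftrightarrow>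
     (SUP \<theta>. risk n \<gamma> \<delta>s \<theta>) = (INF \<delta>. SUP \<theta>. risk n \<gamma> \<delta> \<theta>)"

definition w_star :: "(nat \<Rightarrow> real) \<Rightarrow> nat \<Rightarrow> real" where
  "w_star \<gamma> i = 2 * ln (\<gamma> i / (1 - \<gamma> i))"

definition C_star :: "nat \<Rightarrow> (nat \<Rightarrow> real) \<Rightarrow> real" where
  "C_star n \<gamma> = (\<Sum>i<n. w_star \<gamma> i / 2)"

definition delta_half :: "nat \<Rightarrow> (nat \<Rightarrow> real) \<Rightarrow> decision_rule" where
  "delta_half n \<gamma> y u =
     (let s = (\<Sum>i<n. w_star \<gamma> i * of_bool (y i)) in
      if s > C_star n \<gamma> then True
      else if s < C_star n \<gamma> then False
      else u)"

end

theory Submission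
  imports Defs
begin

abbreviation sc :: "nat \<Rightarrow> (nat \<Rightarrow> real) \<Rightarrow> (nat \<Rightarrow> bool) \<Rightarrow> real" where
  "sc n \<gamma> y \<equiv> (\<Sum>i<n. w_star \<gamma> i * of_bool (y i))"

lemma lik_ratio:
  assumes "\<And>i. i < n \<Longrightarrow> 0 < \<gamma> i \<and> \<gamma> i < 1"
  shows "lik n \<gamma> True y = exp (sc n \<gamma> y - C_star n \<gamma>) * lik n \<gamma> False y"
proof -
  have pi: "(if y i = True then \<gamma> i else 1 - \<gamma> i) =
     exp (w_star \<gamma> i * of_bool (y i) - w_star \<gamma> i / 2) * (if y i = False then \<gamma> i else 1 - \<gamma> i)"
    if "i < n" for i
  proof -
    from assms[OF that] have g: "0 < \<gamma> i" "\<gamma> i < 1" by auto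
    then have q: "0 < \<gamma> i / (1 - \<gamma> i)" by simp
    show ?thesis
    proof (cases "y i")
      case True
      have "exp (w_star \<gamma> i * 1 - w_star \<gamma> i / 2) = \<gamma> i / (1 - \<gamma> i)"
        using q by (simp add: w_star_def)
      then show ?thesis using True g by simp
    next
      case False
      have "exp (w_star \<gamma> i * 0 - w_star \<gamma> i / 2) = inverse (\<gamma> i / (1 - \<gamma> i))"
        using q by (simp add: w_star_def exp_minus)
      then show ?thesis using False g by simp
    qed
  qed
  have "sc n \<gamma> y - C_star n \<gamma> = (\<Sum>i<n. w_star \<gamma> i * of_bool (y i) - w_star \<gamma> i / 2)"
    by (simp add: C_star_def sum_subtractf)
  then have "exp (sc n \<gamma> y - C_star n \<gamma>) = (\<Prod>i<n. exp (w_star \<gamma> i * of_bool (y i) - w_star \<gamma> i / 2))"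
    by (simp add: exp_sum)
  moreover have "lik n \<gamma> True y = (\<Prod>i<n. exp (w_star \<gamma> i * of_bool (y i) - w_star \<gamma> i / 2) * (if y i = False then \<gamma> i else 1 - \<gamma> i))"
    unfolding lik_def by (rule prod.cong[OF refl]) (simp only: pi lessThan_iff)
  ultimately show ?thesis unfolding lik_def
    by (simp only: prod.distrib)
qed

lemma lik_pos:
  assumes "\<And>i. i < n \<Longrightarrow> 0 < \<gamma> i \<and> \<gamma> i < 1"
  shows "0 < lik n \<gamma> th y"
  unfolding lik_def using assms by (intro prod_pos) auto

lemma risk_sum:
  "risk n \<gamma> \<delta> True + risk n \<gamma> \<delta> False =
   (\<Sum>y\<in>obs_space n. \<Sum>u\<in>(UNIV::bool set).
        (1/2) * (if \<delta> y u then lik n \<gamma> False y else lik n \<gamma> True y))"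
  unfolding risk_def sum.distrib[symmetric]
  by (intro sum.cong refl) (auto simp: UNIV_bool)

lemma bayes_pt:
  assumes "\<And>i. i < n \<Longrightarrow> 0 < \<gamma> i \<and> \<gamma> i < 1"
  shows "(if delta_half n \<gamma> y u then lik n \<gamma> False y else lik n \<gamma> True y)
         = min (lik n \<gamma> True y) (lik n \<gamma> False y)"
proof -
  note r = lik_ratio[OF assms, where y=y]
  have p: "0 < lik n \<gamma> False y" by (rule lik_pos[OF assms])
  consider "sc n \<gamma> y > C_star n \<gamma>" | "sc n \<gamma> y < C_star n \<gamma>" | "sc n \<gamma> y = C_star n \<gamma>" by linarith
  then show ?thesis
  proof cases
    case 1
    then have "exp (sc n \<gamma> y - C_star n \<gamma>) > 1" by simp
    then have "lik n \<gamma> True y > lik n \<gamma> False y" using r p by simp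
    then show ?thesis using 1 by (simp add: delta_half_def)
  next
    case 2
    then have "exp (sc n \<gamma> y - C_star n \<gamma>) < 1" by simp
    then have "lik n \<gamma> True y < lik n \<gamma> False y" using r p by simp
    then show ?thesis using 2 by (simp add: delta_half_def)
  next
    case 3
    then have "lik n \<gamma> True y = lik n \<gamma> False y" using r by simp
    then show ?thesis by simp
  qed
qed

lemma bayes_opt:
  assumes "\<And>i. i < n \<Longrightarrow> 0 < \<gamma> i \<and> \<gamma> i < 1"
  shows "risk n \<gamma> (delta_half n \<gamma>) True + risk n \<gamma> (delta_half n \<gamma>) False
     \<le> risk n \<gamma> \<delta> True + risk n \<gamma> \<delta> False"
proof -
  have "\<And>y u. (1/2) * min (lik n \<gamma> True y) (lik n \<gamma> False y) \<le>
     (1/2) * (if \<delta> y u then lik n \<gamma> False y else lik n \<gamma> True y)" by auto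
  then show ?thesis
  unfolding risk_sum
  by (intro sum_mono) (simp add: bayes_pt[OF assms])
qed

definition comp :: "nat \<Rightarrow> (nat \<Rightarrow> bool) \<Rightarrow> (nat \<Rightarrow> bool)" where
  "comp n y = (\<lambda>i. if i < n then \<not> y i else undefined)"

lemma comp_in: "y \<in> obs_space n \<Longrightarrow> comp n y \<in> obs_space n"
  by (auto simp: obs_space_def comp_def)

lemma comp_comp: "y \<in> obs_space n \<Longrightarrow> comp n (comp n y) = y"
  by (auto simp: obs_space_def comp_def PiE_def extensional_def fun_eq_iff)

lemma comp_bij: "bij_betw (comp n) (obs_space n) (obs_space n)"
  by (rule bij_betw_byWitness[where f'="comp n"]) (auto simp: comp_comp comp_in)

lemma lik_comp: "lik n \<gamma> False (comp n y) = lik n \<gamma> True y"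
  unfolding lik_def comp_def by (intro prod.cong) auto

lemma sc_comp: "sc n \<gamma> (comp n y) = 2 * C_star n \<gamma> - sc n \<gamma> y"
proof -
  have "sc n \<gamma> (comp n y) = (\<Sum>i<n. w_star \<gamma> i - w_star \<gamma> i * of_bool (y i))"
    unfolding comp_def by (intro sum.cong) auto
  then show ?thesis by (simp add: C_star_def sum_subtractf sum_divide_distrib[symmetric])
qed

lemma const_risk:
  "risk n \<gamma> (delta_half n \<gamma>) True = risk n \<gamma> (delta_half n \<gamma>) False"
proof -
  let ?g = "\<lambda>y. \<Sum>u\<in>(UNIV::bool set).
        lik n \<gamma> False y * (1/2) * (if delta_half n \<gamma> y u \<noteq> False then 1 else 0)"
  have "risk n \<gamma> (delta_half n \<gamma>) False = (\<Sum>y\<in>obs_space n. ?g y)"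
    unfolding risk_def ..
  also have "\<dots> = (\<Sum>y\<in>obs_space n. ?g (comp n y))"
    using sum.reindex_bij_betw[OF comp_bij, of ?g n] by simp
  also have "\<dots> = risk n \<gamma> (delta_half n \<gamma>) True"
    unfolding risk_def
  proof (rule sum.cong[OF refl])
    fix y
    show "?g (comp n y) = (\<Sum>u\<in>(UNIV::bool set).
        lik n \<gamma> True y * (1/2) * (if delta_half n \<gamma> y u \<noteq> True then 1 else 0))"
      unfolding lik_comp delta_half_def Let_def sc_comp
      by (simp add: UNIV_bool)
  qed
  finally show ?thesis by simp
qed

lemma sup_bool: "(SUP \<theta>. (f::bool\<Rightarrow>real) \<theta>) = max (f True) (f False)"
proof -
  have "range f = {f True, f False}" by (auto simp: UNIV_bool)
  then show ?thesis by (auto intro!: cSup_eq_maximum)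
qed

theorem theorem3:
  fixes n :: nat and \<gamma> :: "nat \<Rightarrow> real"
  assumes "odd n"
    and "\<And>i. i < n \<Longrightarrow> 0 < \<gamma> i \<and> \<gamma> i < 1"
  shows "risk n \<gamma> (delta_half n \<gamma>) True = risk n \<gamma> (delta_half n \<gamma>) False
         \<and> is_minimax n \<gamma> (delta_half n \<gamma>)"
proof
  show c: "risk n \<gamma> (delta_half n \<gamma>) True = risk n \<gamma> (delta_half n \<gamma>) False"
    by (rule const_risk)
  show "is_minimax n \<gamma> (delta_half n \<gamma>)"
    unfolding is_minimax_def
  proof (rule cInf_eq_minimum[symmetric])
    show "(SUP \<theta>. risk n \<gamma> (delta_half n \<gamma>) \<theta>) \<in> range (\<lambda>\<delta>. SUP \<theta>. risk n \<gamma> \<delta> \<theta>)" by simp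
    fix x assume "x \<in> range (\<lambda>\<delta>. SUP \<theta>. risk n \<gamma> \<delta> \<theta>)"
    then obtain \<delta> where x: "x = (SUP \<theta>. risk n \<gamma> \<delta> \<theta>)" by auto
    have "risk n \<gamma> (delta_half n \<gamma>) True + risk n \<gamma> (delta_half n \<gamma>) False
     \<le> risk n \<gamma> \<delta> True + risk n \<gamma> \<delta> False" by (rule bayes_opt[OF assms(2)])
    then show "(SUP \<theta>. risk n \<gamma> (delta_half n \<gamma>) \<theta>) \<le> x"
      unfolding x sup_bool using c by linarith
  qed
qed

end
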